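(* If $G$ is an optimal digraph on $n$ vertices, then $\beta_G < n/2$.
   Context: Digraphs are finite, loopless, with at most one edge $uv$ per ordered pair. A digraph is $2$-free if no distinct $u,v$ have both $uv,vu$ as edges. A circular interval digraph is a digraph together with a fixed arrangement of its vertices in a circle such that for all distinct $u,v,w$ in clockwise order with $uw\in E(G)$, also $uv,vw\in E(G)$. For distinct $u,v$, $d(u,v) = 1 + |\{w: u,w,v \text{ distinct, in clockwise order}\}|$; this is the length of the ordered pair $uv$. A non-edge is an ordered pair $(u,v)$ of distinct vertices with neither $uv$ nor $vu$ an edge; its length is $d(u,v)$. $\alpha_G$ is the minimum length of a non-edge ($\infty$ if there is none) and $\beta_G$ the maximum length of an edge ($0$ if there is none). $\xi(G)$ is the number of pairs $(uv,(w,x))$ with $uv\in E(G)$, $(w,x)$ a non-edge, and $d(u,v)>d(w,x)$. $\tilde P_3(G)$ is the number of triples $(a,b,c)$ of distinct vertices with $ab,bc\in E(G)$ and $ac,ca\notin E(G)$. For fixed $n\ge 4$, $G$ is optimal if it is a $2$-free circular interval digraph on $n$ vertices that maximizes $\tilde P_3$ among all $2$-free circular interval digraphs on $n$ vertices and, subject to this, minimizes $\xi(G)$. *)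

theory Defs
  imports Complex_Main
begin

text \<open>A digraph on n vertices together with a circular arrangement is encoded as an
  edge set E on the vertex set {0..<n}, the vertices being arranged clockwise in the
  order 0, 1, ..., n-1.\<close>

definition cdist :: "nat \<Rightarrow> nat \<Rightarrow> nat \<Rightarrow> nat" where
  "cdist n u v = (v + n - u) mod n"

definition clockwise :: "nat \<Rightarrow> nat \<Rightarrow> nat \<Rightarrow> nat \<Rightarrow> bool" where
  "clockwise n u v w \<longleftrightarrow> u \<noteq> v \<and> v \<noteq> w \<and> u \<noteq> w \<and>
     cdist n u v < cdist n u w"

definition is_digraph :: "nat \<Rightarrow> (nat \<times> nat) set \<Rightarrow> bool" where
  "is_digraph n E \<longleftrightarrow> E \<subseteq> {0..<n} \<times> {0..<n} \<and> (\<forall>v. (v, v) \<notin> E)"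

definition two_free :: "(nat \<times> nat) set \<Rightarrow> bool" where
  "two_free E \<longleftrightarrow> (\<forall>u v. u \<noteq> v \<longrightarrow> \<not> ((u, v) \<in> E \<and> (v, u) \<in> E))"

definition circ_interval :: "nat \<Rightarrow> (nat \<times> nat) set \<Rightarrow> bool" where
  "circ_interval n E \<longleftrightarrow> is_digraph n E \<and>
     (\<forall>u v w. u < n \<and> v < n \<and> w < n \<and> clockwise n u v w \<and> (u, w) \<in> E
        \<longrightarrow> (u, v) \<in> E \<and> (v, w) \<in> E)"

definition nonedge :: "nat \<Rightarrow> (nat \<times> nat) set \<Rightarrow> nat \<Rightarrow> nat \<Rightarrow> bool" where
  "nonedge n E w x \<longleftrightarrow> w < n \<and> x < n \<and> w \<noteq> x \<and> (w, x) \<notin> E \<and> (x, w) \<notin> E"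

definition beta :: "nat \<Rightarrow> (nat \<times> nat) set \<Rightarrow> nat" where
  "beta n E = Max ({cdist n u v | u v. (u, v) \<in> E} \<union> {0})"

definition xi :: "nat \<Rightarrow> (nat \<times> nat) set \<Rightarrow> nat" where
  "xi n E = card {((u, v), (w, x)). (u, v) \<in> E \<and> nonedge n E w x \<and>
                                    cdist n u v > cdist n w x}"

definition P3 :: "nat \<Rightarrow> (nat \<times> nat) set \<Rightarrow> nat" where
  "P3 n E = card {(a, b, c). a < n \<and> b < n \<and> c < n \<and> a \<noteq> b \<and> b \<noteq> c \<and> a \<noteq> c \<and>
                             (a, b) \<in> E \<and> (b, c) \<in> E \<and> (a, c) \<notin> E \<and> (c, a) \<notin> E}"

definition admissible :: "nat \<Rightarrow> (nat \<times> nat) set \<Rightarrow> bool" where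
  "admissible n E \<longleftrightarrow> circ_interval n E \<and> two_free E"

definition optimal :: "nat \<Rightarrow> (nat \<times> nat) set \<Rightarrow> bool" where
  "optimal n E \<longleftrightarrow> admissible n E \<and>
     (\<forall>E'. admissible n E' \<longrightarrow> P3 n E' \<le> P3 n E) \<and>
     (\<forall>E'. admissible n E' \<and> P3 n E' = P3 n E \<longrightarrow> xi n E \<le> xi n E')"

end

theory Submission imports Defs begin

lemma cdist_le: "a \<le> b \<Longrightarrow> b < n \<Longrightarrow> cdist n a b = b - a"
proof -
  assume h: "a \<le> b" "b < n"
  then have "b + n - a = (b - a) + n" by linarith
  then have "(b + n - a) mod n = (b - a) mod n" by simp
  also have "\<dots> = b - a" using h by (intro mod_less) linarith
  finally show ?thesis unfolding cdist_def .
qed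

lemma cdist_gt: "b < a \<Longrightarrow> a < n \<Longrightarrow> cdist n a b = b + n - a"
proof -
  assume h: "b < a" "a < n"
  have "(b + n - a) mod n = b + n - a" using h by (intro mod_less) linarith
  then show ?thesis unfolding cdist_def .
qed

lemma cdist_alt: "a < n \<Longrightarrow> b < n \<Longrightarrow> cdist n a b = (if a \<le> b then b - a else b + n - a)"
  using cdist_le[of a b n] cdist_gt[of b a n] by (cases "a \<le> b") auto

lemma cdist_sum: "a < n \<Longrightarrow> b < n \<Longrightarrow> a \<noteq> b \<Longrightarrow> cdist n a b + cdist n b a = n"
  using cdist_le[of a b n] cdist_gt[of b a n] cdist_le[of b a n] cdist_gt[of a b n]
  by (cases "a \<le> b") linarith+

lemma cdist_int_le: "a \<le> b \<Longrightarrow> b < n \<Longrightarrow> int (cdist n a b) = int b - int a"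
  using cdist_le[of a b n] by simp

lemma cdist_int_gt: "b < a \<Longrightarrow> a < n \<Longrightarrow> int (cdist n a b) = int b + int n - int a"
  using cdist_gt[of b a n] by simp

lemma cdist_pos: "a < n \<Longrightarrow> b < n \<Longrightarrow> a \<noteq> b \<Longrightarrow> cdist n a b > 0"
proof (cases "a \<le> b")
  case True
  assume "b < n" "a \<noteq> b"
  then show ?thesis using True cdist_le[of a b n] by simp
next
  case False
  assume "a < n" "a \<noteq> b"
  then show ?thesis using False cdist_gt[of b a n] by simp
qed

lemma cdist_inj2:
  assumes h: "a < n" "b < n" "c < n" "cdist n a b = cdist n a c" shows "b = c"
proof -
  have e: "int (cdist n a b) = int (cdist n a c)" using h by simp
  show ?thesis
  proof (cases "a \<le> b"; cases "a \<le> c")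
    assume "a \<le> b" "a \<le> c" then show ?thesis using e cdist_int_le[of a b n] cdist_int_le[of a c n] h by linarith
  next
    assume "a \<le> b" "\<not> a \<le> c" then show ?thesis using e cdist_int_le[of a b n] cdist_int_gt[of c a n] h by linarith
  next
    assume "\<not> a \<le> b" "a \<le> c" then show ?thesis using e cdist_int_gt[of b a n] cdist_int_le[of a c n] h by linarith
  next
    assume "\<not> a \<le> b" "\<not> a \<le> c" then show ?thesis using e cdist_int_gt[of b a n] cdist_int_gt[of c a n] h by linarith
  qed
qed

lemma cdist_inj1:
  assumes h: "a < n" "b < n" "c < n" "cdist n a c = cdist n b c" shows "a = b"
proof -
  have e: "int (cdist n a c) = int (cdist n b c)" using h by simp
  show ?thesis
  proof (cases "a \<le> c"; cases "b \<le> c")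
    assume "a \<le> c" "b \<le> c" then show ?thesis using e cdist_int_le[of a c n] cdist_int_le[of b c n] h by linarith
  next
    assume "a \<le> c" "\<not> b \<le> c" then show ?thesis using e cdist_int_le[of a c n] cdist_int_gt[of c b n] h by linarith
  next
    assume "\<not> a \<le> c" "b \<le> c" then show ?thesis using e cdist_int_gt[of c a n] cdist_int_le[of b c n] h by linarith
  next
    assume "\<not> a \<le> c" "\<not> b \<le> c" then show ?thesis using e cdist_int_gt[of c a n] cdist_int_gt[of c b n] h by linarith
  qed
qed

lemma cdist_int: "a < n \<Longrightarrow> b < n \<Longrightarrow>
   int (cdist n a b) = (if a \<le> b then int b - int a else int b + int n - int a)"
  using cdist_int_le[of a b n] cdist_int_gt[of b a n] by (cases "a \<le> b") auto

lemma clockwise_add: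
  assumes h: "a < n" "b < n" "c < n" "clockwise n a b c"
  shows "cdist n a c = cdist n a b + cdist n b c"
proof -
  have lt: "int (cdist n a b) < int (cdist n a c)" and ne: "a \<noteq> b" "b \<noteq> c" "a \<noteq> c"
    using h(4) unfolding clockwise_def by auto
  have e1: "int (cdist n a b) = (if a \<le> b then int b - int a else int b + int n - int a)"
    using h cdist_int by blast
  have e2: "int (cdist n a c) = (if a \<le> c then int c - int a else int c + int n - int a)"
    using h cdist_int by blast
  have e3: "int (cdist n b c) = (if b \<le> c then int c - int b else int c + int n - int b)"
    using h cdist_int by blast
  have "int (cdist n a c) = int (cdist n a b) + int (cdist n b c)"
    by (cases "a \<le> b"; cases "a \<le> c"; cases "b \<le> c") (use lt e1 e2 e3 h in auto)
  then show ?thesis by linarith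
qed

lemma cdist_shift: "u < n \<Longrightarrow> j < n \<Longrightarrow> cdist n u ((u + j) mod n) = j"
proof -
  assume a: "u < n" "j < n"
  show ?thesis
  proof (cases "u + j < n")
    case True
    then have "(u + j) mod n = u + j" by simp
    then show ?thesis using a True cdist_le[of u "u+j" n] by simp
  next
    case False
    then have "(u + j) mod n = (u + j - n) mod n" by (simp add: le_mod_geq)
    also have "\<dots> = u + j - n" using a by (intro mod_less) linarith
    finally have e: "(u + j) mod n = u + j - n" .
    have "cdist n u (u + j - n) = u + j - n + n - u" using a False by (intro cdist_gt) linarith+
    then show ?thesis using e a False by simp
  qed
qed

definition P3set :: "nat \<Rightarrow> (nat \<times> nat) set \<Rightarrow> (nat \<times> nat \<times> nat) set" where
  "P3set n E = {(a, b, c). a < n \<and> b < n \<and> c < n \<and> a \<noteq> b \<and> b \<noteq> c \<and> a \<noteq> c \<and>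
                             (a, b) \<in> E \<and> (b, c) \<in> E \<and> (a, c) \<notin> E \<and> (c, a) \<notin> E}"

definition Xset :: "nat \<Rightarrow> (nat \<times> nat) set \<Rightarrow> ((nat \<times> nat) \<times> (nat \<times> nat)) set" where
  "Xset n E = {((u, v), (w, x)). (u, v) \<in> E \<and> nonedge n E w x \<and> cdist n u v > cdist n w x}"

lemma P3_eq: "P3 n E = card (P3set n E)" by (simp add: P3_def P3set_def)
lemma xi_eq: "xi n E = card (Xset n E)" by (simp add: xi_def Xset_def)

lemma P3set_fin: "finite (P3set n E)"
proof -
  have "P3set n E \<subseteq> {0..<n} \<times> {0..<n} \<times> {0..<n}" by (auto simp: P3set_def)
  then show ?thesis by (rule finite_subset) auto
qed

theorem mainTheorem4:
  fixes n :: nat and E :: "(nat \<times> nat) set"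
  assumes "n \<ge> 4" and "optimal n E"
  shows "real (beta n E) < real n / 2"
proof (rule ccontr)
  define k where "k = beta n E"
  assume "\<not> real (beta n E) < real n / 2"
  then have k2: "n \<le> 2 * k" unfolding k_def by linarith
  have adm: "admissible n E" and opt1: "\<And>E'. admissible n E' \<Longrightarrow> P3 n E' \<le> P3 n E"
    and opt2: "\<And>E'. admissible n E' \<Longrightarrow> P3 n E' = P3 n E \<Longrightarrow> xi n E \<le> xi n E'"
    using assms(2) unfolding optimal_def by auto
  have CI: "circ_interval n E" and A2: "two_free E" using adm unfolding admissible_def by blast+
  have A1: "is_digraph n E" using CI unfolding circ_interval_def by blast
  have sub: "E \<subseteq> {0..<n} \<times> {0..<n}" using A1 unfolding is_digraph_def by blast
  have noloop: "\<And>v. (v,v) \<notin> E" using A1 unfolding is_digraph_def by blast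
  have tf: "\<And>a b. (a,b) \<in> E \<Longrightarrow> (b,a) \<notin> E" using A2 noloop unfolding two_free_def by metis
  have C: "\<forall>a b c. a < n \<and> b < n \<and> c < n \<and> clockwise n a b c \<and> (a, c) \<in> E
        \<longrightarrow> (a, b) \<in> E \<and> (b, c) \<in> E"
    using CI unfolding circ_interval_def by (rule conjunct2)
  have ci: "\<And>a b c. a < n \<Longrightarrow> b < n \<Longrightarrow> c < n \<Longrightarrow> clockwise n a b c \<Longrightarrow> (a,c) \<in> E \<Longrightarrow> (a,b) \<in> E \<and> (b,c) \<in> E"
    using C by blast
  have finE: "finite E" using sub by (rule finite_subset) auto
  define S where "S = {cdist n a b | a b. (a, b) \<in> E} \<union> {0}"
  have S1: "{cdist n a b | a b. (a, b) \<in> E} = (\<lambda>(a,b). cdist n a b) ` E" by auto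
  have finS: "finite S" unfolding S_def S1 using finE by simp
  have kS: "k = Max S" unfolding k_def beta_def S_def by simp
  have "k \<in> S" unfolding kS using finS by (intro Max_in) (auto simp: S_def)
  moreover have "k \<noteq> 0" using k2 assms(1) by auto
  ultimately obtain u w where uwE: "(u,w) \<in> E" and uwk: "cdist n u w = k" unfolding S_def by auto
  have maxe: "\<And>a b. (a,b) \<in> E \<Longrightarrow> cdist n a b \<le> k"
    unfolding kS using finS by (intro Max_ge) (auto simp: S_def)
  have un: "u < n" and wn: "w < n" using uwE sub by auto
  have uw: "u \<noteq> w" using uwE noloop by auto
  have kn: "k < n" using uwk un wn uw by (auto simp: cdist_alt split: if_splits)
  define E' where "E' = E - {(u,w)}"
  have d': "is_digraph n E'" using sub noloop unfolding is_digraph_def E'_def by auto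
  have t': "two_free E'" using tf unfolding two_free_def E'_def by auto
  have c': "\<forall>a b c. a < n \<and> b < n \<and> c < n \<and> clockwise n a b c \<and> (a, c) \<in> E'
        \<longrightarrow> (a, b) \<in> E' \<and> (b, c) \<in> E'"
  proof (intro allI impI)
    fix a b c :: nat assume h: "a < n \<and> b < n \<and> c < n \<and> clockwise n a b c \<and> (a, c) \<in> E'"
    then have acE: "(a,c) \<in> E" using E'_def by auto
    have e1: "(a,b) \<in> E \<and> (b,c) \<in> E" using ci h acE by blast
    have add: "cdist n a c = cdist n a b + cdist n b c" using clockwise_add h by blast
    have ne: "a \<noteq> b" "b \<noteq> c" using h clockwise_def by auto
    have p1: "cdist n a b > 0" "cdist n b c > 0" using cdist_pos h ne by auto
    have "cdist n a c \<le> k" using maxe acE by blast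
    then have "(a,b) \<noteq> (u,w)" "(b,c) \<noteq> (u,w)" using add p1 uwk by auto
    then show "(a, b) \<in> E' \<and> (b, c) \<in> E'" using e1 E'_def by auto
  qed
  have adm': "admissible n E'" unfolding admissible_def circ_interval_def using d' t' c' by blast
  define L1 where "L1 = {c. c < n \<and> c \<noteq> u \<and> (w,c) \<in> E \<and> (u,c) \<notin> E \<and> (c,u) \<notin> E}"
  define L2 where "L2 = {a. a < n \<and> a \<noteq> w \<and> (a,u) \<in> E \<and> (a,w) \<notin> E \<and> (w,a) \<notin> E}"
  define M where "M = {b. b < n \<and> b \<noteq> u \<and> b \<noteq> w \<and> clockwise n u b w}"
  have Mprop: "\<And>b. b \<in> M \<Longrightarrow> (u,b) \<in> E \<and> (b,w) \<in> E"
    using ci un wn uwE unfolding M_def by blast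
  have cardM: "card M = k - 1"
  proof -
    have "bij_betw (cdist n u) M {1..<k}"
      unfolding bij_betw_def
    proof
      show "inj_on (cdist n u) M" using cdist_inj2 un unfolding M_def inj_on_def by blast
      show "cdist n u ` M = {1..<k}"
      proof
        show "cdist n u ` M \<subseteq> {1..<k}"
          using cdist_pos un uwk unfolding M_def clockwise_def by fastforce
        show "{1..<k} \<subseteq> cdist n u ` M"
        proof
          fix j assume j: "j \<in> {1..<k}"
          define b where "b = (u + j) mod n"
          have bn: "b < n" using kn by (simp add: b_def)
          have cb: "cdist n u b = j" using cdist_shift un j kn b_def by auto
          have "b \<noteq> u" using cb j cdist_alt un by auto
          moreover have "b \<noteq> w" using cb j uwk by auto
          ultimately have "b \<in> M" using bn cb j uwk uw unfolding M_def clockwise_def by auto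
          then show "j \<in> cdist n u ` M" using cb by blast
        qed
      qed
    qed
    then show ?thesis by (simp add: bij_betw_same_card)
  qed
  have finL1: "finite L1" and finL2: "finite L2" and finM: "finite M"
    unfolding L1_def L2_def M_def by auto
  have disj: "card L1 + card L2 + card M + 2 \<le> n"
  proof -
    have d1: "L1 \<inter> L2 = {}" unfolding L1_def L2_def by auto
    have d2: "(L1 \<union> L2) \<inter> M = {}" using Mprop tf unfolding L1_def L2_def by auto
    have d3: "(L1 \<union> L2 \<union> M) \<inter> {u,w} = {}" using noloop unfolding L1_def L2_def M_def by auto
    have "card (L1 \<union> L2 \<union> M \<union> {u,w}) = card L1 + card L2 + card M + 2"
      using d1 d2 d3 finL1 finL2 finM uw by (simp add: card_Un_disjoint)
    moreover have "L1 \<union> L2 \<union> M \<union> {u,w} \<subseteq> {0..<n}" using un wn unfolding L1_def L2_def M_def by auto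
    ultimately show ?thesis by (metis card_atLeastLessThan card_mono finite_atLeastLessThan minus_nat.diff_0)
  qed
  have P3ineq: "P3 n E + card M \<le> P3 n E' + card L1 + card L2"
  proof -
    let ?T = "P3set n E" and ?T' = "P3set n E'"
    have "?T \<subseteq> (?T \<inter> ?T') \<union> ((\<lambda>c. (u,w,c)) ` L1 \<union> (\<lambda>a. (a,u,w)) ` L2)"
      unfolding P3set_def L1_def L2_def E'_def by auto
    then have "card ?T \<le> card ((?T \<inter> ?T') \<union> ((\<lambda>c. (u,w,c)) ` L1 \<union> (\<lambda>a. (a,u,w)) ` L2))"
      using P3set_fin finL1 finL2 by (intro card_mono) auto
    also have "\<dots> \<le> card (?T \<inter> ?T') + card L1 + card L2"
    proof -
      have "card ((\<lambda>c. (u,w,c)) ` L1 \<union> (\<lambda>a. (a,u,w)) ` L2) \<le> card ((\<lambda>c. (u,w,c)) ` L1) + card ((\<lambda>a. (a,u,w)) ` L2)"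
        by (rule card_Un_le)
      moreover have "card ((\<lambda>c. (u,w,c)) ` L1) \<le> card L1" using finL1 by (rule card_image_le)
      moreover have "card ((\<lambda>a. (a,u,w)) ` L2) \<le> card L2" using finL2 by (rule card_image_le)
      moreover have "card ((?T \<inter> ?T') \<union> ((\<lambda>c. (u,w,c)) ` L1 \<union> (\<lambda>a. (a,u,w)) ` L2)) \<le>
          card (?T \<inter> ?T') + card ((\<lambda>c. (u,w,c)) ` L1 \<union> (\<lambda>a. (a,u,w)) ` L2)" by (rule card_Un_le)
      ultimately show ?thesis by linarith
    qed
    finally have A: "card ?T \<le> card (?T \<inter> ?T') + card L1 + card L2" .
    let ?G = "(\<lambda>b. (u,b,w)) ` M"
    have G1: "?G \<subseteq> ?T'" using Mprop uwE tf un wn unfolding P3set_def E'_def M_def by auto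
    have G2: "?G \<inter> ?T = {}" using uwE unfolding P3set_def by auto
    have "card (?T \<inter> ?T') + card ?G = card ((?T \<inter> ?T') \<union> ?G)"
      using G2 P3set_fin finM by (intro card_Un_disjoint[symmetric]) auto
    also have "\<dots> \<le> card ?T'" using G1 P3set_fin by (intro card_mono) auto
    finally have B: "card (?T \<inter> ?T') + card M \<le> card ?T'"
      by (simp add: card_image inj_on_def)
    show ?thesis unfolding P3_eq using A B by linarith
  qed
  show False
  proof (cases "card L1 + card L2 < card M")
    case True
    then have "P3 n E < P3 n E'" using P3ineq by linarith
    then show False using opt1[OF adm'] by linarith
  next
    case False
    then have nk: "n = 2 * k" using disj cardM k2 by linarith
    then have "card L1 + card L2 > 0" using False cardM assms(1) by linarith
    then have "L1 \<noteq> {} \<or> L2 \<noteq> {}" by auto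
    then obtain c d where cd: "nonedge n E c d" "cdist n c d < k"
    proof
      assume "L1 \<noteq> {}"
      then obtain c where c: "c \<in> L1" by auto
      have cw: "c \<noteq> w" using c noloop L1_def by auto
      have cn: "c < n" "c \<noteq> u" using c L1_def by auto
      have "cdist n u c \<noteq> k" using cdist_inj2[of u n c w] un wn cn cw uwk by auto
      then have "cdist n u c < k \<or> cdist n c u < k" using cdist_sum[of u n c] un cn nk by linarith
      moreover have "nonedge n E u c" "nonedge n E c u" using c un unfolding L1_def nonedge_def by auto
      ultimately show thesis using that by blast
    next
      assume "L2 \<noteq> {}"
      then obtain c where c: "c \<in> L2" by auto
      have cw: "c \<noteq> u" using c noloop L2_def by auto
      have cn: "c < n" "c \<noteq> w" using c L2_def by auto
      have "cdist n c w \<noteq> k" using cdist_inj1[of c n u w] un wn cn cw uwk by auto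
      then have "cdist n c w < k \<or> cdist n w c < k" using cdist_sum[of c n w] wn cn nk by linarith
      moreover have "nonedge n E w c" "nonedge n E c w" using c wn unfolding L2_def nonedge_def by auto
      ultimately show thesis using that by blast
    qed
    have "P3 n E \<le> P3 n E'" using P3ineq False disj cardM nk by linarith
    then have eqP: "P3 n E' = P3 n E" using opt1[OF adm'] by linarith
    have finX: "finite (Xset n E)"
    proof -
      have "Xset n E \<subseteq> E \<times> ({0..<n} \<times> {0..<n})" unfolding Xset_def nonedge_def by auto
      then show ?thesis using finE by (meson finite_SigmaI finite_atLeastLessThan finite_subset)
    qed
    have Xsub: "Xset n E' \<subseteq> Xset n E"
    proof
      fix p assume p: "p \<in> Xset n E'"
      then obtain a b c d where pe: "p = ((a,b),(c,d))" "(a,b) \<in> E'" "nonedge n E' c d"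
        "cdist n a b > cdist n c d" unfolding Xset_def by auto
      have "cdist n a b \<le> k" using maxe pe E'_def by auto
      moreover have "cdist n w u = k" using cdist_sum[of u n w] un wn uw uwk nk by linarith
      ultimately have "(c,d) \<noteq> (u,w)" "(c,d) \<noteq> (w,u)" using pe uwk by auto
      then have "nonedge n E c d" using pe(3) unfolding nonedge_def E'_def by auto
      then show "p \<in> Xset n E" using pe E'_def unfolding Xset_def by auto
    qed
    have "((u,w),(c,d)) \<in> Xset n E" using uwE cd uwk unfolding Xset_def by auto
    moreover have "((u,w),(c,d)) \<notin> Xset n E'" unfolding Xset_def E'_def by auto
    ultimately have "Xset n E' \<subset> Xset n E" using Xsub by blast
    then have "xi n E' < xi n E" unfolding xi_eq using finX by (rule psubset_card_mono[rotated])
    then show False using opt2[OF adm' eqP] by linarith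
  qed
qed
end
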